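(* Let $\{G_1,\dots,G_g\}$ be a partition of $\{1,\dots,p\}$ into non-empty groups. Then the group wedge $\|\beta\|_{GWedge}:=\|\beta^{\mathcal{G}}\|_W$ defines a norm on $\mathbb{R}^p$.
   Context: For $\beta\in\mathbb{R}^p$ and a group $G_j$, $\|\beta_{G_j}\|_2:=\sqrt{|G_j|}\sqrt{\sum_{i\in G_j}\beta_i^2}$, and $\beta^{\mathcal{G}}:=(\|\beta_{G_1}\|_2,\dots,\|\beta_{G_g}\|_2)^{T}\in\mathbb{R}^g$. The wedge norm on $\mathbb{R}^g$ is $\|x\|_W:=\inf_{a\in\mathcal{A}}\frac12\sum_{j=1}^g\big(x_j^2/a_j+a_j\big)$ with $\mathcal{A}:=\{a\in\mathbb{R}^g:a_j>0\ \forall j,\ a_1\ge\dots\ge a_g\}$. *)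

theory Defs
  imports "HOL-Analysis.Analysis"
begin

text \<open>Groups are indexed by j < g (0-based); vectors in R^g are functions nat => real,
  only the values at indices < g matter.\<close>

definition wedge_A :: "nat \<Rightarrow> (nat \<Rightarrow> real) set" where
  "wedge_A g = {a. (\<forall>j<g. 0 < a j) \<and> (\<forall>i j. i \<le> j \<and> j < g \<longrightarrow> a j \<le> a i)}"

definition wedge_norm :: "nat \<Rightarrow> (nat \<Rightarrow> real) \<Rightarrow> real" where
  "wedge_norm g x = (INF a \<in> wedge_A g. (1/2) * (\<Sum>j<g. (x j)^2 / a j + a j))"

definition group_vec :: "nat \<Rightarrow> (nat \<Rightarrow> 'n::finite set) \<Rightarrow> real^'n \<Rightarrow> (nat \<Rightarrow> real)" where
  "group_vec g G \<beta> = (\<lambda>j. if j < g then sqrt (real (card (G j))) * sqrt (\<Sum>i\<in>G j. (\<beta> $ i)^2) else 0)"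

definition group_wedge :: "nat \<Rightarrow> (nat \<Rightarrow> 'n::finite set) \<Rightarrow> real^'n \<Rightarrow> real" where
  "group_wedge g G \<beta> = wedge_norm g (group_vec g G \<beta>)"

end

theory Submission
  imports Defs
begin

definition wf :: "nat \<Rightarrow> (nat \<Rightarrow> real) \<Rightarrow> (nat \<Rightarrow> real) \<Rightarrow> real" where
  "wf g x a = (1/2) * (\<Sum>j<g. (x j)^2 / a j + a j)"

lemma wn_alt: "wedge_norm g x = (INF a \<in> wedge_A g. wf g x a)"
  by (simp add: wedge_norm_def wf_def)

lemma A_ne: "(\<lambda>_. 1) \<in> wedge_A g"
  by (simp add: wedge_A_def)

lemma wf_nonneg: "a \<in> wedge_A g \<Longrightarrow> 0 \<le> wf g x a"
  unfolding wf_def wedge_A_def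
  by (auto intro!: sum_nonneg add_nonneg_nonneg divide_nonneg_nonneg simp: less_imp_le)

lemma wn_bdd: "bdd_below (wf g x ` wedge_A g)"
  using wf_nonneg by (auto intro!: bdd_belowI[where m=0])

lemma wn_lower: "a \<in> wedge_A g \<Longrightarrow> wedge_norm g x \<le> wf g x a"
  unfolding wn_alt by (rule cINF_lower[OF wn_bdd])

lemma wn_greatest: "(\<And>a. a \<in> wedge_A g \<Longrightarrow> m \<le> wf g x a) \<Longrightarrow> m \<le> wedge_norm g x"
  unfolding wn_alt using A_ne by (intro cINF_greatest) auto

lemma wn_nonneg: "0 \<le> wedge_norm g x"
  by (rule wn_greatest) (rule wf_nonneg)

lemma A_scale: "c > 0 \<Longrightarrow> a \<in> wedge_A g \<Longrightarrow> (\<lambda>j. c * a j) \<in> wedge_A g"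
  unfolding wedge_A_def by auto

lemma wf_scale: "c > 0 \<Longrightarrow> wf g (\<lambda>j. c * x j) (\<lambda>j. c * a j) = c * wf g x a"
proof -
  assume c: "c > 0"
  have "\<And>j. (c * x j)^2 / (c * a j) + c * a j = c * ((x j)^2 / a j + a j)"
    using c by (simp add: power2_eq_square field_simps)
  then show ?thesis unfolding wf_def by (simp add: sum_distrib_left)
qed

lemma wn_scale_le: assumes c: "c > 0"
  shows "wedge_norm g (\<lambda>j. c * x j) \<le> c * wedge_norm g x"
proof -
  have "wedge_norm g (\<lambda>j. c * x j) / c \<le> wedge_norm g x"
  proof (rule wn_greatest)
    fix a assume a: "a \<in> wedge_A g"
    have "wedge_norm g (\<lambda>j. c * x j) \<le> wf g (\<lambda>j. c * x j) (\<lambda>j. c * a j)"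
      by (rule wn_lower[OF A_scale[OF c a]])
    also have "\<dots> = c * wf g x a" by (rule wf_scale[OF c])
    finally show "wedge_norm g (\<lambda>j. c * x j) / c \<le> wf g x a"
      using c by (simp add: field_simps)
  qed
  then show ?thesis using c by (simp add: field_simps)
qed

lemma wn_zero: "wedge_norm g (\<lambda>_. 0) = 0"
proof -
  have "wedge_norm g (\<lambda>j. (1/2) * (0::real)) \<le> (1/2) * wedge_norm g (\<lambda>_. 0)"
    by (rule wn_scale_le) simp
  then show ?thesis using wn_nonneg[of g "\<lambda>_. 0"] by simp
qed

lemma wn_scale: assumes c: "c \<ge> 0"
  shows "wedge_norm g (\<lambda>j. c * x j) = c * wedge_norm g x"
proof (cases "c = 0")
  case True then show ?thesis using wn_zero by simp
next
  case False
  then have c: "c > 0" using c by simp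
  have "wedge_norm g x = wedge_norm g (\<lambda>j. (1/c) * (c * x j))"
    using c by simp
  also have "\<dots> \<le> (1/c) * wedge_norm g (\<lambda>j. c * x j)"
    by (rule wn_scale_le) (simp add: c)
  finally have "c * wedge_norm g x \<le> wedge_norm g (\<lambda>j. c * x j)"
    using c by (simp add: field_simps)
  then show ?thesis using wn_scale_le[OF c, of g x] by simp
qed

lemma wn_pos: assumes k: "k < g" and x: "x k \<noteq> 0"
  shows "0 < wedge_norm g x"
proof -
  have "\<bar>x k\<bar> \<le> wedge_norm g x"
  proof (rule wn_greatest)
    fix a assume a: "a \<in> wedge_A g"
    then have pos: "\<And>j. j < g \<Longrightarrow> 0 < a j" by (simp add: wedge_A_def)
    have nn: "\<And>j. j < g \<Longrightarrow> 0 \<le> (x j)^2 / a j + a j"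
      using pos by (auto intro!: add_nonneg_nonneg divide_nonneg_nonneg simp: less_imp_le)
    have "(x k)^2 / a k + a k \<le> (\<Sum>j<g. (x j)^2 / a j + a j)"
      using k nn by (intro member_le_sum) auto
    moreover have "2 * \<bar>x k\<bar> \<le> (x k)^2 / a k + a k"
    proof -
      have ak: "a k > 0" using pos k by simp
      have "0 \<le> (\<bar>x k\<bar> - a k)^2 / a k" using ak by simp
      also have "(\<bar>x k\<bar> - a k)^2 / a k = (x k)^2 / a k + a k - 2 * \<bar>x k\<bar>"
        using ak by (simp add: power2_eq_square field_simps)
      finally show ?thesis by simp
    qed
    ultimately show "\<bar>x k\<bar> \<le> wf g x a" unfolding wf_def by simp
  qed
  then show ?thesis using x by simp
qed

lemma wn_mono: assumes "\<And>j. j < g \<Longrightarrow> \<bar>x j\<bar> \<le> \<bar>y j\<bar>"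
  shows "wedge_norm g x \<le> wedge_norm g y"
proof (rule wn_greatest)
  fix a assume a: "a \<in> wedge_A g"
  then have pos: "\<And>j. j < g \<Longrightarrow> 0 < a j" by (simp add: wedge_A_def)
  have "\<And>j. j < g \<Longrightarrow> (x j)^2 / a j + a j \<le> (y j)^2 / a j + a j"
  proof -
    fix j assume j: "j < g"
    have "(x j)^2 \<le> (y j)^2" using assms[OF j]
      by (metis abs_ge_zero power2_abs power_mono)
    then show "(x j)^2 / a j + a j \<le> (y j)^2 / a j + a j"
      using pos[OF j] by (simp add: divide_right_mono)
  qed
  then have "wf g x a \<le> wf g y a" unfolding wf_def by (intro mult_left_mono sum_mono) auto
  then show "wedge_norm g x \<le> wf g y a" using wn_lower[OF a, of x] by simp
qed

lemma key_ineq: assumes a: "(a::real) > 0" and b: "b > 0"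
  shows "(x + y)^2 / (a + b) \<le> x^2 / a + y^2 / b"
proof -
  have "x^2 / a + y^2 / b - (x + y)^2 / (a + b) = (b * x - a * y)^2 / (a * b * (a + b))"
    using a b by (simp add: power2_eq_square field_simps)
  also have "\<dots> \<ge> 0" using a b by simp
  finally show ?thesis by simp
qed

lemma wn_subadd: "wedge_norm g (\<lambda>j. x j + y j) \<le> wedge_norm g x + wedge_norm g y"
proof -
  have main: "wedge_norm g (\<lambda>j. x j + y j) \<le> wf g x a + wf g y b"
    if a: "a \<in> wedge_A g" and b: "b \<in> wedge_A g" for a b
  proof -
    have ab: "(\<lambda>j. a j + b j) \<in> wedge_A g"
      using a b unfolding wedge_A_def by (auto intro: add_mono add_pos_pos)
    have pa: "\<And>j. j < g \<Longrightarrow> 0 < a j" and pb: "\<And>j. j < g \<Longrightarrow> 0 < b j"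
      using a b by (auto simp: wedge_A_def)
    have "(\<Sum>j<g. (x j + y j)^2 / (a j + b j) + (a j + b j))
          \<le> (\<Sum>j<g. ((x j)^2 / a j + a j) + ((y j)^2 / b j + b j))"
    proof (rule sum_mono)
      fix j assume "j \<in> {..<g}"
      then show "(x j + y j)^2 / (a j + b j) + (a j + b j)
          \<le> ((x j)^2 / a j + a j) + ((y j)^2 / b j + b j)"
        using key_ineq[OF pa pb, of j j "x j" "y j"] by simp
    qed
    then have "wf g (\<lambda>j. x j + y j) (\<lambda>j. a j + b j) \<le> (1/2) * (\<Sum>j<g. ((x j)^2 / a j + a j) + ((y j)^2 / b j + b j))"
      unfolding wf_def by simp
    also have "\<dots> = wf g x a + wf g y b"
      unfolding wf_def sum.distrib by (simp add: algebra_simps)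
    finally have "wf g (\<lambda>j. x j + y j) (\<lambda>j. a j + b j) \<le> wf g x a + wf g y b" .
    then show ?thesis using wn_lower[OF ab, of "\<lambda>j. x j + y j"] by simp
  qed
  have "\<And>b. b \<in> wedge_A g \<Longrightarrow> wedge_norm g (\<lambda>j. x j + y j) - wf g y b \<le> wedge_norm g x"
    by (rule wn_greatest) (use main in force)
  then have "wedge_norm g (\<lambda>j. x j + y j) - wedge_norm g x \<le> wedge_norm g y"
    by (intro wn_greatest) force
  then show ?thesis by simp
qed

theorem lemma8:
  fixes g :: nat and G :: "nat \<Rightarrow> 'n::finite set"
  assumes nonempty: "\<forall>j<g. G j \<noteq> {}"
    and disjoint: "\<forall>i<g. \<forall>j<g. i \<noteq> j \<longrightarrow> G i \<inter> G j = {}"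
    and cover: "(\<Union>j<g. G j) = UNIV"
  shows "(\<forall>\<beta>::real^'n. 0 \<le> group_wedge g G \<beta>)
       \<and> (\<forall>\<beta>::real^'n. group_wedge g G \<beta> = 0 \<longleftrightarrow> \<beta> = 0)
       \<and> (\<forall>(c::real) (\<beta>::real^'n). group_wedge g G (c *\<^sub>R \<beta>) = \<bar>c\<bar> * group_wedge g G \<beta>)
       \<and> (\<forall>\<beta> \<gamma>::real^'n. group_wedge g G (\<beta> + \<gamma>) \<le> group_wedge g G \<beta> + group_wedge g G \<gamma>)"
proof -
  have gv: "group_vec g G \<beta> = (\<lambda>j. if j < g then sqrt (real (card (G j))) * L2_set (\<lambda>i. \<beta> $ i) (G j) else 0)"
    for \<beta> :: "real^'n"
    unfolding group_vec_def L2_set_def by simp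
  have P1: "\<forall>\<beta>::real^'n. 0 \<le> group_wedge g G \<beta>"
    by (simp add: group_wedge_def wn_nonneg)
  have P2: "group_wedge g G \<beta> = 0 \<longleftrightarrow> \<beta> = 0" for \<beta> :: "real^'n"
  proof
    assume b0: "\<beta> = 0"
    have z: "L2_set (\<lambda>i. \<beta> $ i) A = 0" for A
      unfolding L2_set_def b0 by simp
    have "group_vec g G \<beta> = (\<lambda>_. 0)" by (rule ext) (simp add: gv z)
    then show "group_wedge g G \<beta> = 0" by (simp add: group_wedge_def wn_zero)
  next
    assume h: "group_wedge g G \<beta> = 0"
    show "\<beta> = 0"
    proof (rule ccontr)
      assume "\<beta> \<noteq> 0"
      then obtain i where i: "\<beta> $ i \<noteq> 0" by (metis vec_eq_iff zero_index)
      from cover obtain k where k: "k < g" "i \<in> G k" by blast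
      have "card (G k) > 0" using k nonempty by (simp add: card_gt_0_iff)
      moreover have "L2_set (\<lambda>i. \<beta> $ i) (G k) \<noteq> 0"
        using i k by (simp add: L2_set_eq_0_iff) blast
      ultimately have "group_vec g G \<beta> k \<noteq> 0" using k by (auto simp: gv)
      then have "0 < group_wedge g G \<beta>" unfolding group_wedge_def by (rule wn_pos[OF k(1)])
      then show False using h by simp
    qed
  qed
  have P3: "group_wedge g G (c *\<^sub>R \<beta>) = \<bar>c\<bar> * group_wedge g G \<beta>" for c and \<beta> :: "real^'n"
  proof -
    have "group_vec g G (c *\<^sub>R \<beta>) = (\<lambda>j. \<bar>c\<bar> * group_vec g G \<beta> j)"
    proof
      fix j
      have hh: "L2_set (\<lambda>i. (c *\<^sub>R \<beta>) $ i) (G j) = \<bar>c\<bar> * L2_set (\<lambda>i. \<beta> $ i) (G j)"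
        by (simp add: L2_set_def power_mult_distrib real_sqrt_mult sum_distrib_left[symmetric])
      show "group_vec g G (c *\<^sub>R \<beta>) j = \<bar>c\<bar> * group_vec g G \<beta> j"
        unfolding gv hh by simp
    qed
    then show ?thesis by (simp add: group_wedge_def wn_scale)
  qed
  have P4: "group_wedge g G (\<beta> + \<gamma>) \<le> group_wedge g G \<beta> + group_wedge g G \<gamma>"
    for \<beta> \<gamma> :: "real^'n"
  proof -
    have "group_wedge g G (\<beta> + \<gamma>) \<le> wedge_norm g (\<lambda>j. group_vec g G \<beta> j + group_vec g G \<gamma> j)"
      unfolding group_wedge_def
    proof (rule wn_mono)
      fix j assume j: "j < g"
      have ee: "L2_set (\<lambda>i. (\<beta> + \<gamma>) $ i) (G j) = L2_set (\<lambda>i. \<beta> $ i + \<gamma> $ i) (G j)"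
        by (simp add: L2_set_def)
      have "L2_set (\<lambda>i. \<beta> $ i + \<gamma> $ i) (G j) \<le> L2_set (\<lambda>i. \<beta> $ i) (G j) + L2_set (\<lambda>i. \<gamma> $ i) (G j)"
        using L2_set_triangle_ineq[of "\<lambda>i. \<beta> $ i" "\<lambda>i. \<gamma> $ i" "G j"] by simp
      then have "sqrt (real (card (G j))) * L2_set (\<lambda>i. \<beta> $ i + \<gamma> $ i) (G j)
          \<le> sqrt (real (card (G j))) * L2_set (\<lambda>i. \<beta> $ i) (G j) + sqrt (real (card (G j))) * L2_set (\<lambda>i. \<gamma> $ i) (G j)"
        by (simp add: distrib_left[symmetric] mult_left_mono)
      then show "\<bar>group_vec g G (\<beta> + \<gamma>) j\<bar> \<le> \<bar>group_vec g G \<beta> j + group_vec g G \<gamma> j\<bar>"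
        using j unfolding gv ee by simp
    qed
    also have "\<dots> \<le> group_wedge g G \<beta> + group_wedge g G \<gamma>"
      unfolding group_wedge_def by (rule wn_subadd)
    finally show ?thesis .
  qed
  show ?thesis using P1 P2 P3 P4 by blast
qed

end
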